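(* Let $X$ be a real Banach space and $W,Y$ closed subspaces with $W\subseteq Y\subseteq X$. If $Y$ has property-$(HB)$ in $X$, then $Y/W$ has property-$(HB)$ in $X/W$.
   Context: For a closed subspace $V$ of a Banach space $E$, $V^\perp=\{e^*\in E^*:e^*|_V=0\}$. $V$ has property-$(HB)$ in $E$ if there is a linear projection $P$ on $E^*$ with range $V^\perp$ and $\|P\|=1$ such that, writing $G=(I-P)(E^* )$, for every $e^*=v^\#+v^\perp$ with $v^\#\in G$, $0\neq v^\perp\in V^\perp$, one has $\|e^*\|>\|v^\#\|$ and $\|e^*\|\ge\|v^\perp\|$. $Y/W$ is regarded as a subspace of $X/W$ with the quotient norm. *)

theory Defs
  imports "HOL-Analysis.Analysis"
begin

definition annihilator :: "'a::real_normed_vector set \<Rightarrow> ('a \<Rightarrow>\<^sub>L real) set" where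
  "annihilator V = {f. \<forall>v\<in>V. blinfun_apply f v = 0}"

definition property_HB :: "'a::real_normed_vector set \<Rightarrow> bool" where
  "property_HB V \<longleftrightarrow>
     (\<exists>P :: ('a \<Rightarrow>\<^sub>L real) \<Rightarrow> ('a \<Rightarrow>\<^sub>L real).
        bounded_linear P \<and> P \<circ> P = P \<and> range P = annihilator V \<and> onorm P = 1 \<and>
        (\<forall>vs \<in> range (\<lambda>e. e - P e). \<forall>vp \<in> annihilator V. vp \<noteq> 0 \<longrightarrow>
            norm (vs + vp) > norm vs \<and> norm (vs + vp) \<ge> norm vp))"

text \<open>q : X \<rightarrow> Q realises Q as the quotient space X/W with the quotient norm.\<close>
definition is_quotient_map :: "('a::real_normed_vector \<Rightarrow> 'b::real_normed_vector) \<Rightarrow> 'a set \<Rightarrow> bool" where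
  "is_quotient_map q W \<longleftrightarrow> linear q \<and> surj q \<and> {x. q x = 0} = W \<and>
     (\<forall>x. norm (q x) = infdist x W)"

end

theory Submission
  imports Defs
begin

lemma ann_le_infdist:
  fixes W :: "'a::real_normed_vector set"
  assumes "W \<noteq> {}" "subspace W" "f \<in> annihilator W"
  shows "\<bar>blinfun_apply f x\<bar> \<le> norm f * infdist x W"
proof (cases "norm f = 0")
  case True then show ?thesis using infdist_nonneg by simp
next
  case False
  then have pos: "norm f > 0" by simp
  have "\<bar>blinfun_apply f x\<bar> / norm f \<le> infdist x W"
    unfolding infdist_notempty[OF assms(1)]
  proof (rule cINF_greatest[OF assms(1)])
    fix w assume w: "w \<in> W"
    have "blinfun_apply f w = 0" using assms(3) w by (simp add: annihilator_def)
    then have "blinfun_apply f x = blinfun_apply f (x - w)" by (simp add: blinfun.diff_right)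
    also have "\<bar>\<dots>\<bar> \<le> norm f * norm (x - w)" using norm_blinfun[of f "x - w"] by simp
    finally show "\<bar>blinfun_apply f x\<bar> / norm f \<le> dist x w"
      using pos by (simp add: dist_norm field_simps)
  qed
  then show ?thesis using pos by (simp add: field_simps)
qed

theorem theorem3p10:
  fixes W Y :: "'a::banach set"
    and q :: "'a \<Rightarrow> 'b::banach"
  assumes "subspace W" and "closed W"
    and "subspace Y" and "closed Y"
    and "W \<subseteq> Y"
    and "property_HB Y"
    and "is_quotient_map q W"
  shows "property_HB (q ` Y)"
proof -
  have lq: "linear q" and sq: "surj q" and kq: "{x. q x = 0} = W"
    and nq: "\<And>x. norm (q x) = infdist x W"
    using assms(7) unfolding is_quotient_map_def by auto
  have W0: "0 \<in> W" using assms(1) by (simp add: subspace_0)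
  have Wne: "W \<noteq> {}" using W0 by auto
  have qle: "norm (q x) \<le> norm x" for x
    using nq[of x] infdist_le[OF W0, of x] by (simp add: dist_norm)
  have blq: "bounded_linear q"
  proof (rule bounded_linear_intro[where K = 1])
    show "q (x + y) = q x + q y" for x y using lq by (simp add: linear_iff)
    show "q (r *\<^sub>R x) = r *\<^sub>R q x" for r x using lq by (simp add: linear_iff)
    show "norm (q x) \<le> norm x * 1" for x using qle by simp
  qed
  interpret q: bounded_linear q by (rule blq)
  obtain P where blP: "bounded_linear P" and idP: "P \<circ> P = P" and rP: "range P = annihilator Y"
    and oP: "onorm P = 1"
    and hbP: "\<forall>vs \<in> range (\<lambda>e. e - P e). \<forall>vp \<in> annihilator Y. vp \<noteq> 0 \<longrightarrow>
            norm (vs + vp) > norm vs \<and> norm (vs + vp) \<ge> norm vp"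
    by (insert assms(6)[unfolded property_HB_def], elim exE conjE, rule that, assumption+)
  interpret P: bounded_linear P by (rule blP)
  define T :: "('b \<Rightarrow>\<^sub>L real) \<Rightarrow> ('a \<Rightarrow>\<^sub>L real)" where "T g = Blinfun (\<lambda>x. blinfun_apply g (q x))" for g
  have Tapp: "blinfun_apply (T g) x = blinfun_apply g (q x)" for g x
  proof -
    have "bounded_linear (\<lambda>x. blinfun_apply g (q x))"
      by (rule bounded_linear_compose[OF blinfun.bounded_linear_right blq])
    then show ?thesis unfolding T_def by (simp add: bounded_linear_Blinfun_apply)
  qed
  have Tadd: "T (g + h) = T g + T h" for g h by (rule blinfun_eqI) (simp add: Tapp blinfun.add_left)
  have Tscale: "T (c *\<^sub>R g) = c *\<^sub>R T g" for c g by (rule blinfun_eqI) (simp add: Tapp blinfun.scaleR_left blinfun.zero_left)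
  have Tdiff: "T (g - h) = T g - T h" for g h by (rule blinfun_eqI) (simp add: Tapp blinfun.diff_left)
  have T0: "T 0 = 0" by (rule blinfun_eqI) (simp add: Tapp blinfun.scaleR_left blinfun.zero_left)
  have TW: "T g \<in> annihilator W" for g
    using kq by (auto simp: annihilator_def Tapp)
  have qeq: "blinfun_apply f a = blinfun_apply f b" if "f \<in> annihilator W" "q a = q b" for f a b
  proof -
    have "q (a - b) = 0" using that(2) q.diff by simp
    then have "a - b \<in> W" using kq by auto
    then have "blinfun_apply f (a - b) = 0" using that(1) by (simp add: annihilator_def)
    then show ?thesis by (simp add: blinfun.diff_right)
  qed
  have Tnorm: "norm (T g) = norm g" for g
  proof (rule antisym)
    show "norm (T g) \<le> norm g"
    proof (rule norm_blinfun_bound)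
      fix x
      have "norm (blinfun_apply g (q x)) \<le> norm g * norm (q x)" by (rule norm_blinfun)
      also have "\<dots> \<le> norm g * norm x" by (rule mult_left_mono[OF qle]) simp
      finally show "norm (blinfun_apply (T g) x) \<le> norm g * norm x" by (simp add: Tapp blinfun.scaleR_left blinfun.zero_left)
    qed simp
    show "norm g \<le> norm (T g)"
    proof (rule norm_blinfun_bound)
      fix z
      obtain x where z: "z = q x" using sq by (metis surjD)
      have "\<bar>blinfun_apply (T g) x\<bar> \<le> norm (T g) * infdist x W"
        by (rule ann_le_infdist[OF Wne assms(1) TW])
      then show "norm (blinfun_apply g z) \<le> norm (T g) * norm z"
        by (simp add: z Tapp nq)
    qed simp
  qed
  have Tinj: "g = h" if "T g = T h" for g h
  proof -
    have "norm (g - h) = 0" using that Tnorm[of "g - h"] by (simp add: Tdiff)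
    then show ?thesis by simp
  qed
  define S :: "('a \<Rightarrow>\<^sub>L real) \<Rightarrow> ('b \<Rightarrow>\<^sub>L real)" where "S f = Blinfun (\<lambda>z. blinfun_apply f (inv q z))" for f
  have qinv: "q (inv q z) = z" for z using sq by (simp add: surj_f_inv_f)
  have TS: "T (S f) = f" if f: "f \<in> annihilator W" for f
  proof -
    have bl: "bounded_linear (\<lambda>z. blinfun_apply f (inv q z))"
    proof (rule bounded_linear_intro[where K = "norm f"])
      fix a b
      have "q (inv q (a + b)) = q (inv q a + inv q b)" by (simp only: qinv q.add)
      then have "blinfun_apply f (inv q (a + b)) = blinfun_apply f (inv q a + inv q b)" by (rule qeq[OF f])
      then show "blinfun_apply f (inv q (a + b)) = blinfun_apply f (inv q a) + blinfun_apply f (inv q b)"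
        by (simp add: blinfun.add_right)
    next
      fix r a
      have "q (inv q (r *\<^sub>R a)) = q (r *\<^sub>R inv q a)" by (simp only: qinv q.scaleR)
      then have "blinfun_apply f (inv q (r *\<^sub>R a)) = blinfun_apply f (r *\<^sub>R inv q a)" by (rule qeq[OF f])
      then show "blinfun_apply f (inv q (r *\<^sub>R a)) = r *\<^sub>R blinfun_apply f (inv q a)"
        by (simp add: blinfun.scaleR_right)
    next
      fix z
      have "\<bar>blinfun_apply f (inv q z)\<bar> \<le> norm f * infdist (inv q z) W"
        by (rule ann_le_infdist[OF Wne assms(1) f])
      then show "norm (blinfun_apply f (inv q z)) \<le> norm z * norm f"
        using nq[of "inv q z"] by (simp add: qinv mult.commute)
    qed
    show ?thesis
    proof (rule blinfun_eqI)
      fix x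
      show "blinfun_apply (T (S f)) x = blinfun_apply f x"
        unfolding Tapp S_def bounded_linear_Blinfun_apply[OF bl]
        by (rule qeq[OF f qinv])
    qed
  qed
  have annYW: "annihilator Y \<subseteq> annihilator W" using assms(5) by (auto simp: annihilator_def)
  have PY: "P f \<in> annihilator Y" for f
  proof -
    have "P f \<in> range P" by (rule rangeI)
    then show ?thesis by (simp only: rP)
  qed
  have PinW: "P f \<in> annihilator W" for f by (rule subsetD[OF annYW PY])
  have Pfix: "P f = f" if "f \<in> annihilator Y" for f
  proof -
    have "f \<in> range P" using that rP by simp
    then obtain h where h: "f = P h" by (rule rangeE)
    show ?thesis using fun_cong[OF idP, of h] unfolding h by simp
  qed
  define P' where "P' g = S (P (T g))" for g
  have K: "T (P' g) = P (T g)" for g unfolding P'_def by (rule TS[OF PinW])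
  have annQ: "g \<in> annihilator (q ` Y) \<longleftrightarrow> T g \<in> annihilator Y" for g
    by (auto simp: annihilator_def Tapp)
  have blP': "bounded_linear P'"
  proof (rule bounded_linear_intro[where K = 1])
    fix g h show "P' (g + h) = P' g + P' h"
      by (rule Tinj) (simp add: K Tadd P.add)
  next
    fix r g show "P' (r *\<^sub>R g) = r *\<^sub>R P' g"
      by (rule Tinj) (simp add: K Tscale P.scaleR)
  next
    fix g
    have "norm (P' g) = norm (P (T g))" using Tnorm[of "P' g"] K by simp
    also have "\<dots> \<le> onorm P * norm (T g)" by (rule onorm[OF blP])
    finally show "norm (P' g) \<le> norm g * 1" using oP Tnorm by simp
  qed
  have idP': "P' \<circ> P' = P'"
  proof
    fix g show "(P' \<circ> P') g = P' g"
      by (simp, rule Tinj) (simp add: K Pfix[OF PY])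
  qed
  have rP': "range P' = annihilator (q ` Y)"
  proof
    show "range P' \<subseteq> annihilator (q ` Y)"
      using annQ K PY by auto
    show "annihilator (q ` Y) \<subseteq> range P'"
    proof
      fix g assume "g \<in> annihilator (q ` Y)"
      then have "T g \<in> annihilator Y" using annQ by simp
      then have "P' g = g" by (intro Tinj) (simp add: K Pfix)
      then show "g \<in> range P'" by (metis rangeI)
    qed
  qed
  have oP': "onorm P' = 1"
  proof (rule antisym)
    show "onorm P' \<le> 1"
    proof (rule onorm_bound)
      show "0 \<le> (1::real)" by simp
    next
      fix g
      have "norm (P' g) = norm (P (T g))" using Tnorm[of "P' g"] K by simp
      also have "\<dots> \<le> onorm P * norm (T g)" by (rule onorm[OF blP])
      finally show "norm (P' g) \<le> 1 * norm g" using oP Tnorm by simp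
    qed
    have "P \<noteq> (\<lambda>x. 0)"
    proof
      assume "P = (\<lambda>x. 0)"
      then have "onorm P = 0" by (simp only: onorm_zero)
      then show False using oP by simp
    qed
    then obtain f where f: "P f \<noteq> 0" by auto
    define g where "g = S (P f)"
    have Tg: "T g = P f" unfolding g_def by (rule TS[OF PinW])
    have "g \<noteq> 0" using Tg f T0 by auto
    moreover have "P' g = g"
      by (rule Tinj) (simp add: K Tg Pfix[OF PY])
    ultimately have "norm g \<le> onorm P' * norm g" using onorm[OF blP', of g] by simp
    then show "1 \<le> onorm P'" using \<open>g \<noteq> 0\<close> by simp
  qed
  have hb: "\<forall>vs \<in> range (\<lambda>e. e - P' e). \<forall>vp \<in> annihilator (q ` Y). vp \<noteq> 0 \<longrightarrow>
            norm (vs + vp) > norm vs \<and> norm (vs + vp) \<ge> norm vp"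
  proof (intro ballI impI)
    fix vs vp assume vs: "vs \<in> range (\<lambda>e. e - P' e)" and vp: "vp \<in> annihilator (q ` Y)" and nz: "vp \<noteq> 0"
    obtain e where e: "vs = e - P' e" using vs by (rule rangeE)
    have a1: "T vs \<in> range (\<lambda>e. e - P e)"
      unfolding e Tdiff K by (rule range_eqI[where x = "T e"]) simp
    have a2: "T vp \<in> annihilator Y" using vp annQ by simp
    have a3: "T vp \<noteq> 0"
    proof
      assume "T vp = 0"
      then have "T vp = T 0" by (simp only: T0)
      then have "vp = 0" by (rule Tinj)
      then show False using nz by simp
    qed
    have c: "norm (T vs + T vp) > norm (T vs) \<and> norm (T vs + T vp) \<ge> norm (T vp)"
    proof -
      have "\<forall>vp \<in> annihilator Y. vp \<noteq> 0 \<longrightarrow>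
            norm (T vs + vp) > norm (T vs) \<and> norm (T vs + vp) \<ge> norm vp"
        using hbP a1 by (rule bspec)
      then have "T vp \<noteq> 0 \<longrightarrow> norm (T vs + T vp) > norm (T vs) \<and> norm (T vs + T vp) \<ge> norm (T vp)"
        using a2 by (rule bspec)
      then show ?thesis using a3 by (rule mp)
    qed
    have "T vs + T vp = T (vs + vp)" by (simp only: Tadd)
    then show "norm (vs + vp) > norm vs \<and> norm (vs + vp) \<ge> norm vp"
      using c by (simp only: Tnorm)
  qed
  show ?thesis unfolding property_HB_def
    using blP' idP' rP' oP' hb by (intro exI[of _ P'] conjI)
qed

end
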